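(* For $Z\in\mathfrak m_0$, the differential of $P:\mathfrak m_0\to\mathfrak m_0$, $P(Z)=\mathrm{ad}_\Upsilon\mathrm{Ad}_{\exp Z}\Upsilon$, at $Z$ is $dP_Z=S_{JZ}\circ E_Z:\mathfrak m_0\to\mathfrak m_0$, where $E_Z=\sum_{n\ge0}\frac{\mathrm{ad}_Z^{2n}}{(2n+1)!}$ and $S_{Y}=\sum_{n\ge0}\frac{\mathrm{ad}_{Y}^{2n}}{(2n)!}$.
   Context: Let $G$ be a simple complex algebraic group with commuting antiholomorphic involutions $\sigma,\theta$, $G_u=G^\theta$ maximal compact, $G_0=G^\sigma$, $K=G^{\sigma\theta}$, $K_0=K\cap G_0$. $\mathfrak g=\mathfrak k\oplus\mathfrak m$ is the $\pm1$-eigenspace decomposition of $\sigma\theta$, $\mathfrak k_0=\mathfrak k\cap\mathfrak g_0$, $\mathfrak m_0=\mathfrak m\cap\mathfrak g_0$. Assume $G_u/K_0$ is an irreducible Hermitian symmetric space of compact type; $\Upsilon$ is in the center of $\mathfrak k_0$ with $\mathrm{ad}_\Upsilon$ having eigenvalues $\pm i$ on $\mathfrak m$; $J=\mathrm{ad}_\Upsilon|_{\mathfrak m}$ (it preserves $\mathfrak m_0$, and $E_Z$, $S_{JZ}$ preserve $\mathfrak m_0$). *)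

theory Defs
  imports "HOL-Analysis.Analysis"
begin

text \<open>Lie algebra conventions: the bracket is a function br, ad_X = br X.
  Ad of exp X acting on Y is the exponential series of ad_X applied to Y.\<close>

definition Ad_exp :: "('a::real_normed_vector \<Rightarrow> 'a \<Rightarrow> 'a) \<Rightarrow> 'a \<Rightarrow> 'a \<Rightarrow> 'a" where
  "Ad_exp br X Y = (\<Sum>n. ((br X) ^^ n) Y /\<^sub>R fact n)"

definition E_op :: "('a::real_normed_vector \<Rightarrow> 'a \<Rightarrow> 'a) \<Rightarrow> 'a \<Rightarrow> 'a \<Rightarrow> 'a" where
  "E_op br Z W = (\<Sum>n. ((br Z) ^^ (2*n)) W /\<^sub>R fact (2*n+1))"

definition S_op :: "('a::real_normed_vector \<Rightarrow> 'a \<Rightarrow> 'a) \<Rightarrow> 'a \<Rightarrow> 'a \<Rightarrow> 'a" where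
  "S_op br Y W = (\<Sum>n. ((br Y) ^^ (2*n)) W /\<^sub>R fact (2*n))"

end

theory Submission
  imports Defs
begin


locale liealg =
  fixes br :: "'a::euclidean_space \<Rightarrow> 'a \<Rightarrow> 'a"
  assumes bil: "bilinear br"
    and antisym: "\<And>x y. br x y = - br y x"
    and jacobi: "\<And>x y z. br x (br y z) + br y (br z x) + br z (br x y) = 0"
begin

lemma linR: "linear (br x)" using bil by (simp add: bilinear_def)
lemma linL: "linear (\<lambda>x. br x y)" using bil by (simp add: bilinear_def)

lemma br_addR: "br x (y + z) = br x y + br x z" using linR linear_add by blast
lemma br_diffR: "br x (y - z) = br x y - br x z" using linR linear_diff by blast
lemma br_scaleR: "br x (c *\<^sub>R y) = c *\<^sub>R br x y" using linR linear_scale by blast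
lemma br_negR: "br x (- y) = - br x y" using linR linear_neg by blast
lemma br_0R: "br x 0 = 0" using linR linear_0 by blast
lemma br_sumR: "br x (sum f S) = sum (\<lambda>i. br x (f i)) S" using linR linear_sum by blast
lemma br_addL: "br (y + z) x = br y x + br z x" using linL[of x] linear_add by fastforce
lemma br_scaleL: "br (c *\<^sub>R y) x = c *\<^sub>R br y x" using linL[of x] linear_scale by fastforce
lemma br_negL: "br (- y) x = - br y x" using linL[of x] linear_neg by fastforce
lemma br_0L: "br 0 x = 0" using linL[of x] linear_0 by fastforce

lemma derivation: "br x (br y z) = br (br x y) z + br y (br x z)"
proof -
  have "br x (br y z) = - br y (br z x) - br z (br x y)" using jacobi[of x y z]
    by (simp add: algebra_simps eq_neg_iff_add_eq_0)
  also have "br y (br z x) = - br y (br x z)" by (metis antisym br_negR)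
  also have "br z (br x y) = - br (br x y) z" by (metis antisym)
  finally show ?thesis by simp
qed

lemma lin_pow: "linear (br x ^^ n)"
proof (induction n)
  case 0 then show ?case by (simp add: linear_id[unfolded id_def])
next
  case (Suc n) then show ?case using linear_compose[OF Suc linR[of x]] by (simp add: o_def)
qed

lemma pow_sum: "(br x ^^ n) (sum f S) = sum (\<lambda>i. (br x ^^ n) (f i)) S"
  using lin_pow linear_sum by blast
lemma pow_scale: "(br x ^^ n) (c *\<^sub>R y) = c *\<^sub>R (br x ^^ n) y"
  using lin_pow linear_scale by blast
lemma pow_neg: "(br x ^^ n) (- y) = - (br x ^^ n) y"
  using lin_pow linear_neg by blast
lemma pow_add: "(br x ^^ n) (y + z) = (br x ^^ n) y + (br x ^^ n) z"
  using lin_pow linear_add by blast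
lemma pow_0: "(br x ^^ n) 0 = 0"
  using lin_pow linear_0 by blast

definition cs :: "nat \<Rightarrow> nat \<Rightarrow> real" where "cs n l = (-1)^l * real (n choose l)"

definition s2 :: "'a \<Rightarrow> nat \<Rightarrow> 'a \<Rightarrow> 'a \<Rightarrow> 'a" where
  "s2 X n V Y = (\<Sum>l\<le>n. cs n l *\<^sub>R (br X ^^ (n - l)) (br ((br X ^^ l) V) Y))"

lemma s2_rec: "s2 X (Suc n) V Y = br X (s2 X n V Y) - s2 X n (br X V) Y"
proof -
  let ?t = "\<lambda>m j. (br X ^^ (m - j)) (br ((br X ^^ j) V) Y)"
  have L: "s2 X (Suc n) V Y = ?t (Suc n) 0 + (\<Sum>j\<le>n. cs (Suc n) (Suc j) *\<^sub>R ?t (Suc n) (Suc j))"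
    unfolding s2_def by (subst sum.atMost_Suc_shift) (simp add: cs_def)
  have "br X (s2 X n V Y) = (\<Sum>l\<le>n. cs n l *\<^sub>R ?t (Suc n) l)"
    unfolding s2_def br_sumR br_scaleR
    by (intro sum.cong refl) (simp add: Suc_diff_le)
  also have "\<dots> = ?t (Suc n) 0 + (\<Sum>j<n. cs n (Suc j) *\<^sub>R ?t (Suc n) (Suc j))"
  proof (cases n)
    case 0 then show ?thesis by (simp add: cs_def)
  next
    case (Suc k)
    then show ?thesis
      by (simp only: sum.atMost_Suc_shift lessThan_Suc_atMost) (simp add: cs_def)
  qed
  also have "\<dots> = ?t (Suc n) 0 + (\<Sum>j\<le>n. cs n (Suc j) *\<^sub>R ?t (Suc n) (Suc j))"
    by (simp add: lessThan_Suc_atMost[symmetric] cs_def)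
  finally have R1: "br X (s2 X n V Y) = \<dots>" .
  have R2: "s2 X n (br X V) Y = (\<Sum>j\<le>n. cs n j *\<^sub>R ?t (Suc n) (Suc j))"
    unfolding s2_def by (intro sum.cong refl) (simp add: funpow_Suc_right del: funpow.simps)
  have "cs (Suc n) (Suc j) = cs n (Suc j) - cs n j" for j
    by (simp add: cs_def algebra_simps)
  then show ?thesis unfolding L R1 R2
    by (simp add: scaleR_diff_left sum_subtractf)
qed

lemma C2: "br V ((br X ^^ n) Y) = s2 X n V Y"
proof (induction n arbitrary: V)
  case 0 then show ?case by (simp add: s2_def cs_def)
next
  case (Suc n)
  have "br V ((br X ^^ Suc n) Y) = br V (br X ((br X ^^ n) Y))" by simp
  also have "\<dots> = br X (br V ((br X ^^ n) Y)) - br (br X V) ((br X ^^ n) Y)"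
    using derivation[of X V "(br X ^^ n) Y"] by (simp add: algebra_simps)
  also have "\<dots> = s2 X (Suc n) V Y" using Suc by (simp add: s2_rec)
  finally show ?case .
qed

primrec D :: "'a \<Rightarrow> 'a \<Rightarrow> 'a \<Rightarrow> nat \<Rightarrow> 'a" where
  "D X h Y 0 = 0"
| "D X h Y (Suc n) = br X (D X h Y n) + br h ((br X ^^ n) Y)"

lemma C1: "D X W Y n = (\<Sum>l<n. cs n (Suc l) *\<^sub>R (br X ^^ (n - Suc l)) (br Y ((br X ^^ l) W)))"
proof (induction n)
  case 0 then show ?case by simp
next
  case (Suc n)
  let ?t = "\<lambda>l. (br X ^^ (n - l)) (br Y ((br X ^^ l) W))"
  have A: "br X (D X W Y n) = (\<Sum>l<Suc n. cs n (Suc l) *\<^sub>R ?t l)"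
  proof -
    have "(\<Sum>l<Suc n. cs n (Suc l) *\<^sub>R ?t l) = (\<Sum>l<n. cs n (Suc l) *\<^sub>R ?t l)"
      by (simp add: cs_def)
    also have "\<dots> = br X (D X W Y n)"
      unfolding Suc br_sumR br_scaleR
    proof (intro sum.cong refl)
      fix l assume "l \<in> {..<n}"
      then have "n - l = Suc (n - Suc l)" by simp
      then show "cs n (Suc l) *\<^sub>R ?t l = cs n (Suc l) *\<^sub>R br X ((br X ^^ (n - Suc l)) (br Y ((br X ^^ l) W)))"
        by simp
    qed
    finally show ?thesis by simp
  qed
  have B: "br W ((br X ^^ n) Y) = - (\<Sum>l<Suc n. cs n l *\<^sub>R ?t l)"
  proof -
    have "br W ((br X ^^ n) Y) = (\<Sum>l\<le>n. cs n l *\<^sub>R (br X ^^ (n - l)) (br ((br X ^^ l) W) Y))"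
      using C2[where V=W and X=X and n=n and Y=Y] unfolding s2_def .
    also have "\<dots> = (\<Sum>l\<le>n. - (cs n l *\<^sub>R ?t l))"
    proof (intro sum.cong refl)
      fix l
      have "br ((br X ^^ l) W) Y = - br Y ((br X ^^ l) W)" by (rule antisym)
      then show "cs n l *\<^sub>R (br X ^^ (n - l)) (br ((br X ^^ l) W) Y) = - (cs n l *\<^sub>R ?t l)"
        by (simp add: pow_neg)
    qed
    finally show ?thesis by (simp add: sum_negf lessThan_Suc_atMost)
  qed
  have "cs (Suc n) (Suc l) = cs n (Suc l) - cs n l" for l
    by (simp add: cs_def algebra_simps)
  then show ?case unfolding D.simps A B
    by (simp add: scaleR_diff_left sum_subtractf)
qed

lemma sum_split_parity: "(\<Sum>l<2*(m::nat). f l) = (\<Sum>c<m. f (2*c) + f (2*c+1))"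
  by (induction m) (simp_all add: numeral_2_eq_2 add.assoc)

end

locale hermsetup = liealg br for br :: "'a::euclidean_space \<Rightarrow> 'a \<Rightarrow> 'a" +
  fixes k0 m0 :: "'a set" and U :: 'a
  assumes sub_k: "subspace k0" and sub_m: "subspace m0"
    and kk: "\<And>x y. x \<in> k0 \<Longrightarrow> y \<in> k0 \<Longrightarrow> br x y \<in> k0"
    and km: "\<And>x y. x \<in> k0 \<Longrightarrow> y \<in> m0 \<Longrightarrow> br x y \<in> m0"
    and mm: "\<And>x y. x \<in> m0 \<Longrightarrow> y \<in> m0 \<Longrightarrow> br x y \<in> k0"
    and Ups_k: "U \<in> k0"
    and Ups_central: "\<And>x. x \<in> k0 \<Longrightarrow> br U x = 0"
    and J_sq: "\<And>x. x \<in> m0 \<Longrightarrow> br U (br U x) = - x"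
begin

lemma mk: "x \<in> m0 \<Longrightarrow> y \<in> k0 \<Longrightarrow> br x y \<in> m0"
  using km[of y x] antisym[of x y] sub_m by (simp add: subspace_neg)

lemma Jm: "x \<in> m0 \<Longrightarrow> br U x \<in> m0" using km Ups_k by blast

lemma parity:
  assumes X: "X \<in> m0"
  shows "(V \<in> m0 \<longrightarrow> (even n \<longrightarrow> (br X ^^ n) V \<in> m0) \<and> (odd n \<longrightarrow> (br X ^^ n) V \<in> k0)) \<and>
         (V \<in> k0 \<longrightarrow> (even n \<longrightarrow> (br X ^^ n) V \<in> k0) \<and> (odd n \<longrightarrow> (br X ^^ n) V \<in> m0))"
proof (induction n)
  case 0 then show ?case by simp
next
  case (Suc n) then show ?case using mm[OF X] mk[OF X] by auto
qed

lemma par_mm: "X \<in> m0 \<Longrightarrow> V \<in> m0 \<Longrightarrow> even n \<Longrightarrow> (br X ^^ n) V \<in> m0" using parity by blast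
lemma par_mk: "X \<in> m0 \<Longrightarrow> V \<in> m0 \<Longrightarrow> odd n \<Longrightarrow> (br X ^^ n) V \<in> k0" using parity by blast
lemma par_kk: "X \<in> m0 \<Longrightarrow> V \<in> k0 \<Longrightarrow> even n \<Longrightarrow> (br X ^^ n) V \<in> k0" using parity by blast
lemma par_km: "X \<in> m0 \<Longrightarrow> V \<in> k0 \<Longrightarrow> odd n \<Longrightarrow> (br X ^^ n) V \<in> m0" using parity by blast

lemma F3: "X \<in> m0 \<Longrightarrow> Y \<in> m0 \<Longrightarrow> br (br U X) Y = - br X (br U Y)"
  using derivation[of U X Y] Ups_central[OF mm[of X Y]] by (simp add: eq_neg_iff_add_eq_0)

lemma F5: "X \<in> m0 \<Longrightarrow> K \<in> k0 \<Longrightarrow> br (br U X) K = br U (br X K)"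
  using derivation[of U X K] Ups_central[of K] by (simp add: br_0R)

lemma C4: "X \<in> m0 \<Longrightarrow> V \<in> m0 \<Longrightarrow> (br (br U X) ^^ (2*k)) V = - br U ((br X ^^ (2*k)) (br U V))"
proof (induction k arbitrary: V)
  case 0 then show ?case using J_sq by simp
next
  case (Suc k)
  let ?B = "br (br U X)"
  have BV: "?B V = - br X (br U V)" using F3 Suc.prems by blast
  have BVk: "br X (br U V) \<in> k0" using mm Jm Suc.prems by blast
  have BBV: "?B (?B V) = - br U (br X (br X (br U V)))"
    unfolding BV br_negR using F5[OF Suc.prems(1) BVk] by simp
  have AA: "br X (br X (br U V)) \<in> m0" using mk mm Jm Suc.prems by blast
  have "(?B ^^ (2 * Suc k)) V = (?B ^^ (2*k)) (?B (?B V))"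
    by (simp add: funpow_Suc_right del: funpow.simps)
  also have "\<dots> = - br U ((br X ^^ (2*k)) (br U (?B (?B V))))"
    using Suc.IH[of "?B (?B V)"] Suc.prems BBV AA Jm by (simp add: subspace_neg sub_m)
  also have "br U (?B (?B V)) = br X (br X (br U V))"
    unfolding BBV br_negR J_sq[OF AA] by simp
  also have "(br X ^^ (2*k)) (br X (br X (br U V))) = (br X ^^ (2 * Suc k)) (br U V)"
    by (simp add: funpow_Suc_right del: funpow.simps)
  finally show ?case .
qed


lemma term_zero_oddl:
  assumes "X \<in> m0" "W \<in> m0" "odd l"
  shows "br U ((br X ^^ j) (br U ((br X ^^ l) W))) = 0"
  using Ups_central[OF par_mk[OF assms]] by (simp add: pow_0 br_0R)

lemma term_zero_oddj:
  assumes "X \<in> m0" "W \<in> m0" "even l" "odd j"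
  shows "br U ((br X ^^ j) (br U ((br X ^^ l) W))) = 0"
  using Ups_central[OF par_mk[OF assms(1) Jm[OF par_mm[OF assms(1,2,3)]] assms(4)]] .

lemma deg_even:
  assumes X: "X \<in> m0" and W: "W \<in> m0"
  shows "br U (D X W U (2*m)) = 0"
proof -
  have "br U (D X W U (2*m)) = (\<Sum>l<2*m. cs (2*m) (Suc l) *\<^sub>R br U ((br X ^^ (2*m - Suc l)) (br U ((br X ^^ l) W))))"
    unfolding C1 br_sumR br_scaleR ..
  also have "\<dots> = 0"
  proof (intro sum.neutral ballI)
    fix l assume l: "l \<in> {..<2*m}"
    show "cs (2*m) (Suc l) *\<^sub>R br U ((br X ^^ (2*m - Suc l)) (br U ((br X ^^ l) W))) = 0"
    proof (cases "even l")
      case True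
      then have "odd (2*m - Suc l)" using l by auto
      then show ?thesis using term_zero_oddj[OF X W True] by simp
    next
      case False then show ?thesis using term_zero_oddl[OF X W] by simp
    qed
  qed
  finally show ?thesis .
qed

lemma deg_odd1:
  assumes X: "X \<in> m0" and W: "W \<in> m0"
  shows "br U (D X W U (2*m+1)) = (\<Sum>c\<le>m. real (Suc (2*m) choose Suc (2*c)) *\<^sub>R
            (br (br U X) ^^ (2*(m-c))) ((br X ^^ (2*c)) W))"
proof -
  define t where "t l = cs (Suc (2*m)) (Suc l) *\<^sub>R br U ((br X ^^ (2*m - l)) (br U ((br X ^^ l) W)))" for l
  have "br U (D X W U (2*m+1)) = (\<Sum>l<Suc (2*m). t l)"
    unfolding C1 br_sumR br_scaleR t_def by simp
  also have "\<dots> = (\<Sum>c<m. t (2*c) + t (2*c+1)) + t (2*m)"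
    by (simp add: sum_split_parity)
  also have "\<dots> = (\<Sum>c<m. t (2*c)) + t (2*m)"
  proof -
    have "t (2*c+1) = 0" for c
      unfolding t_def using term_zero_oddl[OF X W, of "2*c+1"] by simp
    then show ?thesis by simp
  qed
  also have "\<dots> = (\<Sum>c\<le>m. t (2*c))"
    by (simp add: lessThan_Suc_atMost[symmetric])
  also have "\<dots> = (\<Sum>c\<le>m. real (Suc (2*m) choose Suc (2*c)) *\<^sub>R
            (br (br U X) ^^ (2*(m-c))) ((br X ^^ (2*c)) W))"
  proof (intro sum.cong refl)
    fix c assume c: "c \<in> {..m}"
    have e: "2*m - 2*c = 2*(m-c)" by simp
    have "br U ((br X ^^ (2*(m-c))) (br U ((br X ^^ (2*c)) W))) = - (br (br U X) ^^ (2*(m-c))) ((br X ^^ (2*c)) W)"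
      using C4[OF X par_mm[OF X W], of "2*c" "m-c"] by simp
    then show "t (2*c) = real (Suc (2*m) choose Suc (2*c)) *\<^sub>R (br (br U X) ^^ (2*(m-c))) ((br X ^^ (2*c)) W)"
      unfolding t_def cs_def e by (simp del: binomial_Suc_Suc)
  qed
  finally show ?thesis .
qed

lemma deg_odd:
  assumes X: "X \<in> m0" and W: "W \<in> m0"
  shows "br U (D X W U (2*m+1)) /\<^sub>R fact (2*m+1) = (\<Sum>a\<le>m.
      (br (br U X) ^^ (2*a)) ((br X ^^ (2*(m-a))) W) /\<^sub>R (fact (2*a) * fact (2*(m-a)+1)))"
proof -
  have "br U (D X W U (2*m+1)) /\<^sub>R fact (2*m+1) = (\<Sum>c\<le>m.
      (br (br U X) ^^ (2*(m-c))) ((br X ^^ (2*c)) W) /\<^sub>R (fact (2*(m-c)) * fact (2*c+1)))"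
    unfolding deg_odd1[OF X W] scaleR_sum_right
  proof (intro sum.cong refl)
    fix c assume "c \<in> {..m}"
    then have cm: "Suc (2*c) \<le> Suc (2*m)" by simp
    have d: "Suc (2*m) - Suc (2*c) = 2*(m-c)" by simp
    have b: "real (Suc (2*m) choose Suc (2*c)) = fact (Suc (2*m)) / (fact (Suc (2*c)) * fact (2*(m-c)))"
      using binomial_fact[OF cm, where 'a=real] unfolding d .
    have "real (Suc (2*m) choose Suc (2*c)) / fact (Suc (2*m)) = 1 / (fact (2*(m-c)) * fact (Suc (2*c)))"
      unfolding b by (simp del: fact_Suc add: field_simps)
    then have "real (Suc (2*m) choose Suc (2*c)) / fact (2*m+1) = 1 / (fact (2*(m-c)) * fact (2*c+1))"
      by simp
    then show "(real (Suc (2*m) choose Suc (2*c)) *\<^sub>R (br (br U X) ^^ (2*(m-c))) ((br X ^^ (2*c)) W)) /\<^sub>R fact (2*m+1)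
        = (br (br U X) ^^ (2*(m-c))) ((br X ^^ (2*c)) W) /\<^sub>R (fact (2*(m-c)) * fact (2*c+1))"
      by (simp add: divide_inverse_commute)
  qed
  also have "\<dots> = (\<Sum>a\<le>m.
      (br (br U X) ^^ (2*a)) ((br X ^^ (2*(m-a))) W) /\<^sub>R (fact (2*a) * fact (2*(m-a)+1)))"
  proof -
    let ?g = "\<lambda>a. (br (br U X) ^^ (2*a)) ((br X ^^ (2*(m-a))) W) /\<^sub>R (fact (2*a) * fact (2*(m-a)+1))"
    have "(\<Sum>c\<le>m. ?g (m - c)) = (\<Sum>a\<le>m. ?g a)"
      using sum.nat_diff_reindex[of ?g "Suc m"] by (simp add: lessThan_Suc_atMost)
    moreover have "c \<le> m \<Longrightarrow> ?g (m - c) = (br (br U X) ^^ (2*(m-c))) ((br X ^^ (2*c)) W) /\<^sub>R (fact (2*(m-c)) * fact (2*c+1))" for c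
      by (simp add: mult.commute)
    ultimately show ?thesis by simp
  qed
  finally show ?thesis .
qed

end


lemma cauchy_lin:
  fixes T :: "nat \<Rightarrow> 'a::banach \<Rightarrow> 'b::banach" and v :: "nat \<Rightarrow> 'a"
  assumes lin: "\<And>i. bounded_linear (T i)"
    and bnd: "\<And>i x. norm (T i x) \<le> t i * norm x"
    and tpos: "\<And>i. 0 \<le> t i"
    and ts: "summable t"
    and vs: "summable (\<lambda>j. norm (v j))"
  shows "(\<lambda>k. \<Sum>i\<le>k. T i (v (k - i))) sums (\<Sum>i. T i (\<Sum>j. v j))"
proof -
  let ?S1 = "\<lambda>n::nat. {..<n} \<times> {..<n}"
  let ?S2 = "\<lambda>n::nat. {(i,j). i + j < n}"
  have S1_mono: "\<And>m n. m \<le> n \<Longrightarrow> ?S1 m \<subseteq> ?S1 n" by auto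
  have S2_le_S1: "\<And>n. ?S2 n \<subseteq> ?S1 n" by auto
  have S1_le_S2: "\<And>n. ?S1 (n div 2) \<subseteq> ?S2 n" by auto
  have finite_S1: "\<And>n. finite (?S1 n)" by simp
  with S2_le_S1 have finite_S2: "\<And>n. finite (?S2 n)" by (rule finite_subset)
  let ?g = "\<lambda>(i,j). T i (v j)"
  let ?f = "\<lambda>(i,j). t i * norm (v j)"
  have f_nonneg: "\<And>x. 0 \<le> ?f x" using tpos by (auto intro: mult_nonneg_nonneg)
  then have norm_sum_f: "\<And>A. norm (sum ?f A) = sum ?f A"
    unfolding real_norm_def
    by (simp only: abs_of_nonneg sum_nonneg [rule_format])
  define V where "V = (\<Sum>j. v j)"
  have vsum: "summable v" using vs summable_norm_cancel by blast
  have VL: "(\<lambda>n. \<Sum>j<n. v j) \<longlonglongrightarrow> V" unfolding V_def using summable_LIMSEQ[OF vsum] .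
  have TVs: "summable (\<lambda>i. T i V)"
    by (rule summable_comparison_test'[where g="\<lambda>i. t i * norm V" and N=0])
      (use ts bnd in \<open>auto intro: summable_mult2\<close>)
  have g1: "sum ?g (?S1 n) = (\<Sum>i<n. T i V) + (\<Sum>i<n. T i ((\<Sum>j<n. v j) - V))" for n
  proof -
    have "sum ?g (?S1 n) = (\<Sum>i<n. \<Sum>j<n. T i (v j))"
      by (simp add: sum.cartesian_product)
    also have "\<dots> = (\<Sum>i<n. T i (\<Sum>j<n. v j))"
      by (rule sum.cong[OF refl], rule linear_sum[OF bounded_linear.linear[OF lin], symmetric])
    also have "\<dots> = (\<Sum>i<n. T i V + T i ((\<Sum>j<n. v j) - V))"
      using linear_diff[OF bounded_linear.linear[OF lin]] by simp
    finally show ?thesis by (simp add: sum.distrib)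
  qed
  have "(\<lambda>n. \<Sum>i<n. T i ((\<Sum>j<n. v j) - V)) \<longlonglongrightarrow> 0"
  proof (rule tendsto_0_le[where K="suminf t"])
    show "(\<lambda>n. (\<Sum>j<n. v j) - V) \<longlonglongrightarrow> 0" using VL by (simp add: LIM_zero)
    show "\<forall>\<^sub>F n in sequentially. norm (\<Sum>i<n. T i ((\<Sum>j<n. v j) - V)) \<le> norm ((\<Sum>j<n. v j) - V) * suminf t"
    proof (intro always_eventually allI)
      fix n
      have "norm (\<Sum>i<n. T i ((\<Sum>j<n. v j) - V)) \<le> (\<Sum>i<n. t i * norm ((\<Sum>j<n. v j) - V))"
        by (rule order_trans[OF norm_sum sum_mono]) (rule bnd)
      also have "\<dots> = (\<Sum>i<n. t i) * norm ((\<Sum>j<n. v j) - V)" by (simp add: sum_distrib_right)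
      also have "\<dots> \<le> suminf t * norm ((\<Sum>j<n. v j) - V)"
        by (intro mult_right_mono sum_le_suminf ts) (auto simp: tpos)
      finally show "norm (\<Sum>i<n. T i ((\<Sum>j<n. v j) - V)) \<le> norm ((\<Sum>j<n. v j) - V) * suminf t"
        by (simp add: mult.commute)
    qed
  qed
  then have 1: "(\<lambda>n. sum ?g (?S1 n)) \<longlonglongrightarrow> (\<Sum>i. T i V)"
    unfolding g1 using tendsto_add[OF summable_LIMSEQ[OF TVs]] by fastforce
  have "(\<lambda>n. (\<Sum>k<n. t k) * (\<Sum>k<n. norm (v k))) \<longlonglongrightarrow> (\<Sum>k. t k) * (\<Sum>k. norm (v k))"
    using ts vs by (intro tendsto_mult summable_LIMSEQ)
  then have "(\<lambda>n. sum ?f (?S1 n)) \<longlonglongrightarrow> (\<Sum>k. t k) * (\<Sum>k. norm (v k))"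
    by (simp only: sum_product sum.Sigma [rule_format] finite_lessThan)
  then have "convergent (\<lambda>n. sum ?f (?S1 n))"
    by (rule convergentI)
  then have Cauchy: "Cauchy (\<lambda>n. sum ?f (?S1 n))"
    by (rule convergent_Cauchy)
  have "Zfun (\<lambda>n. sum ?f (?S1 n - ?S2 n)) sequentially"
  proof (rule ZfunI, simp only: eventually_sequentially norm_sum_f)
    fix r :: real
    assume r: "0 < r"
    from CauchyD [OF Cauchy r] obtain N
      where "\<forall>m\<ge>N. \<forall>n\<ge>N. norm (sum ?f (?S1 m) - sum ?f (?S1 n)) < r" ..
    then have "\<And>m n. N \<le> n \<Longrightarrow> n \<le> m \<Longrightarrow> norm (sum ?f (?S1 m - ?S1 n)) < r"
      by (simp only: sum_diff finite_S1 S1_mono)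
    then have N: "\<And>m n. N \<le> n \<Longrightarrow> n \<le> m \<Longrightarrow> sum ?f (?S1 m - ?S1 n) < r"
      by (simp only: norm_sum_f)
    show "\<exists>N. \<forall>n\<ge>N. sum ?f (?S1 n - ?S2 n) < r"
    proof (intro exI allI impI)
      fix n
      assume "2 * N \<le> n"
      then have n: "N \<le> n div 2" by simp
      have "sum ?f (?S1 n - ?S2 n) \<le> sum ?f (?S1 n - ?S1 (n div 2))"
        by (intro sum_mono2 finite_Diff finite_S1 f_nonneg Diff_mono subset_refl S1_le_S2)
      also have "\<dots> < r"
        using n div_le_dividend by (rule N)
      finally show "sum ?f (?S1 n - ?S2 n) < r" .
    qed
  qed
  then have "Zfun (\<lambda>n. sum ?g (?S1 n - ?S2 n)) sequentially"
    apply (rule Zfun_le [rule_format])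
    apply (simp only: norm_sum_f)
    apply (rule order_trans [OF norm_sum sum_mono])
    apply (auto simp add: bnd)
    done
  then have 2: "(\<lambda>n. sum ?g (?S1 n) - sum ?g (?S2 n)) \<longlonglongrightarrow> 0"
    unfolding tendsto_Zfun_iff diff_0_right
    by (simp only: sum_diff finite_S1 S2_le_S1)
  with 1 have "(\<lambda>n. sum ?g (?S2 n)) \<longlonglongrightarrow> (\<Sum>i. T i V)"
    by (rule Lim_transform2)
  then show ?thesis
    unfolding V_def by (simp only: sums_def sum.triangle_reindex)
qed

lemma hd_transform_sub:
  assumes "(f has_derivative f') (at x within s)" "bounded_linear g'"
    "\<And>y. y \<in> s \<Longrightarrow> f' (y - x) = g' (y - x)"
  shows "(f has_derivative g') (at x within s)"
proof -
  have "\<forall>\<^sub>F y in at x within s. (1 / norm (y - x)) *\<^sub>R (f y - (f x + f' (y - x))) =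
      (1 / norm (y - x)) *\<^sub>R (f y - (f x + g' (y - x)))"
    unfolding eventually_at_filter using assms(3) by (auto intro: always_eventually)
  note e = this
  from assms(1) have "((\<lambda>y. (1 / norm (y - x)) *\<^sub>R (f y - (f x + f' (y - x)))) \<longlongrightarrow> 0) (at x within s)"
    unfolding has_derivative_within by blast
  from iffD1[OF tendsto_cong[OF e] this]
  have "((\<lambda>y. (1 / norm (y - x)) *\<^sub>R (f y - (f x + g' (y - x)))) \<longlongrightarrow> 0) (at x within s)" .
  then show ?thesis using assms(2) unfolding has_derivative_within by blast
qed

lemma summable_even_fact:
  fixes y :: real
  assumes "0 \<le> y"
  shows "summable (\<lambda>n. y^(2*n) / fact (2*n+k))"
proof (rule summable_comparison_test'[where N=0])
  show "summable (\<lambda>n. (y^2)^n / fact n)"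
    using summable_exp_generic[of "y^2"] by (simp add: divide_inverse_commute)
  fix n :: nat
  have "fact n \<le> (fact (2*n+k) :: real)" by (intro fact_mono) simp
  then show "norm (y^(2*n) / fact (2*n+k)) \<le> (y^2)^n / fact n"
    using assms by (simp add: power_mult divide_left_mono)
qed

lemma linear_suminf:
  fixes L :: "nat \<Rightarrow> 'a::real_vector \<Rightarrow> 'b::real_normed_vector"
  assumes "\<And>n. linear (L n)" "\<And>x. summable (\<lambda>n. L n x)"
  shows "linear (\<lambda>x. \<Sum>n. L n x)"
proof (rule linearI)
  fix x y
  have "summable (\<lambda>n. L n x)" "summable (\<lambda>n. L n y)" using assms(2) by blast+
  then have "(\<Sum>n. L n x) + (\<Sum>n. L n y) = (\<Sum>n. L n x + L n y)" by (rule suminf_add)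
  then show "(\<Sum>n. L n (x + y)) = (\<Sum>n. L n x) + (\<Sum>n. L n y)"
    using linear_add[OF assms(1)] by simp
next
  fix c :: real and x show "(\<Sum>n. L n (c *\<^sub>R x)) = c *\<^sub>R (\<Sum>n. L n x)"
    using assms by (simp add: linear_scale suminf_scaleR_right)
qed



context liealg begin

lemma bbil: "bounded_bilinear br" using bil bilinear_conv_bounded_bilinear by blast

definition Kb where "Kb = (SOME K. 0 < K \<and> (\<forall>x y. norm (br x y) \<le> norm x * norm y * K))"

lemma Kb_ex: "0 < Kb \<and> (\<forall>x y. norm (br x y) \<le> norm x * norm y * Kb)"
  unfolding Kb_def by (rule someI_ex) (use bounded_bilinear.pos_bounded[OF bbil] in blast)

lemma Kb_pos: "0 < Kb" using Kb_ex by blast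
lemma Kb_bnd: "norm (br x y) \<le> norm x * norm y * Kb" using Kb_ex by blast

lemma N1: "norm ((br X ^^ n) Y) \<le> (Kb * norm X)^n * norm Y"
proof (induction n)
  case 0 then show ?case by simp
next
  case (Suc n)
  have "norm ((br X ^^ Suc n) Y) \<le> norm X * norm ((br X ^^ n) Y) * Kb" using Kb_bnd by simp
  also have "\<dots> \<le> norm X * ((Kb * norm X)^n * norm Y) * Kb"
    using Suc Kb_pos by (intro mult_right_mono mult_left_mono) auto
  also have "\<dots> = (Kb * norm X)^Suc n * norm Y" by (simp add: algebra_simps)
  finally show ?case .
qed

lemma N2:
  assumes "norm X \<le> R"
  shows "norm (D X h Y (Suc n)) \<le> real (Suc n) * Kb^Suc n * R^n * norm h * norm Y"
proof (induction n)
  case 0 then show ?case using Kb_bnd[of h Y] by (simp add: br_0R algebra_simps)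
next
  case (Suc n)
  have R0: "0 \<le> R" using assms norm_ge_zero order_trans by blast
  have a: "norm (br X (D X h Y (Suc n))) \<le> R * (real (Suc n) * Kb^Suc n * R^n * norm h * norm Y) * Kb"
  proof -
    have "norm (br X (D X h Y (Suc n))) \<le> norm X * norm (D X h Y (Suc n)) * Kb" by (rule Kb_bnd)
    also have "\<dots> \<le> R * (real (Suc n) * Kb^Suc n * R^n * norm h * norm Y) * Kb"
      using Suc assms Kb_pos R0 by (intro mult_right_mono mult_mono) auto
    finally show ?thesis .
  qed
  have p: "(Kb * norm X)^Suc n \<le> (Kb * R)^Suc n"
    using assms Kb_pos by (intro power_mono mult_left_mono) auto
  have b: "norm (br h ((br X ^^ Suc n) Y)) \<le> norm h * ((Kb * R)^Suc n * norm Y) * Kb"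
  proof -
    have "norm (br h ((br X ^^ Suc n) Y)) \<le> norm h * norm ((br X ^^ Suc n) Y) * Kb" by (rule Kb_bnd)
    also have "\<dots> \<le> norm h * ((Kb * R)^Suc n * norm Y) * Kb"
    proof -
      have "norm ((br X ^^ Suc n) Y) \<le> (Kb * R)^Suc n * norm Y"
        using order_trans[OF N1[where X=X and n="Suc n" and Y=Y] mult_right_mono[OF p norm_ge_zero]] .
      then show ?thesis using Kb_pos by (intro mult_right_mono mult_left_mono) auto
    qed
    finally show ?thesis .
  qed
  have "norm (D X h Y (Suc (Suc n))) \<le> norm (br X (D X h Y (Suc n))) + norm (br h ((br X ^^ Suc n) Y))"
    by (simp only: D.simps norm_triangle_ineq)
  also have "\<dots> \<le> R * (real (Suc n) * Kb^Suc n * R^n * norm h * norm Y) * Kb + norm h * ((Kb * R)^Suc n * norm Y) * Kb"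
    using a b by linarith
  also have "\<dots> = real (Suc (Suc n)) * Kb^Suc (Suc n) * R^Suc n * norm h * norm Y"
    by (simp add: algebra_simps power_mult_distrib)
  finally show ?case .
qed

lemma DP: "((\<lambda>X. (br X ^^ n) Y) has_derivative (\<lambda>h. D X h Y n)) (at X within S)"
proof (induction n)
  case 0 then show ?case by (simp add: has_derivative_const)
next
  case (Suc n)
  show ?case
    using bounded_bilinear.FDERIV[OF bbil has_derivative_ident Suc] by simp
qed

lemma pow_even_norm_summable:
  "summable (\<lambda>n. norm ((br Y ^^ (2*n)) x /\<^sub>R fact (2*n+k)))"
proof (rule summable_comparison_test'[where N=0])
  show "summable (\<lambda>n. (Kb * norm Y)^(2*n) / fact (2*n+k) * norm x)"
    by (intro summable_mult2 summable_even_fact) (use Kb_pos in simp)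
  fix n :: nat
  show "norm (norm ((br Y ^^ (2*n)) x /\<^sub>R fact (2*n+k))) \<le> (Kb * norm Y)^(2*n) / fact (2*n+k) * norm x"
  proof -
    have "norm ((br Y ^^ (2*n)) x) / fact (2*n+k) \<le> (Kb * norm Y)^(2*n) * norm x / fact (2*n+k)"
      using N1[where X=Y and n="2*n" and Y=x] by (rule divide_right_mono) simp
    then show ?thesis by (simp add: divide_inverse_commute)
  qed
qed

lemma pow_even_summable: "summable (\<lambda>n. (br Y ^^ (2*n)) x /\<^sub>R fact (2*n+k))"
  using summable_norm_cancel[OF pow_even_norm_summable] .

lemma lin_pow_scale: "linear (\<lambda>x. (br Y ^^ n) x /\<^sub>R c)"
  by (rule linearI) (simp_all add: pow_add pow_scale scaleR_add_right)

lemma Ad_summable: "summable (\<lambda>n. (br X ^^ n) Y /\<^sub>R fact n)"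
proof (rule summable_comparison_test'[where N=0])
  show "summable (\<lambda>n. (Kb * norm X)^n / fact n * norm Y)"
    using summable_exp_generic[of "Kb * norm X"] by (intro summable_mult2) (simp add: divide_inverse_commute)
  fix n :: nat
  show "norm ((br X ^^ n) Y /\<^sub>R fact n) \<le> (Kb * norm X)^n / fact n * norm Y"
  proof -
    have "norm ((br X ^^ n) Y) / fact n \<le> (Kb * norm X)^n * norm Y / fact n"
      using N1[where X=X and n=n and Y=Y] by (rule divide_right_mono) simp
    then show ?thesis by (simp add: divide_inverse_commute)
  qed
qed

end



theorem lemma4p13:
  fixes br :: "'a::euclidean_space \<Rightarrow> 'a \<Rightarrow> 'a"
    and k0 m0 :: "'a set" and Ups Z :: 'a
  assumes bil: "bilinear br"
    and antisym: "\<And>x y. br x y = - br y x"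
    and jacobi: "\<And>x y z. br x (br y z) + br y (br z x) + br z (br x y) = 0"
    and sub_k: "subspace k0" and sub_m: "subspace m0"
    and direct: "k0 \<inter> m0 = {0}" and span_all: "\<And>x. \<exists>a\<in>k0. \<exists>b\<in>m0. x = a + b"
    and kk: "\<And>x y. x \<in> k0 \<Longrightarrow> y \<in> k0 \<Longrightarrow> br x y \<in> k0"
    and km: "\<And>x y. x \<in> k0 \<Longrightarrow> y \<in> m0 \<Longrightarrow> br x y \<in> m0"
    and mm: "\<And>x y. x \<in> m0 \<Longrightarrow> y \<in> m0 \<Longrightarrow> br x y \<in> k0"
    and Ups_k: "Ups \<in> k0"
    and Ups_central: "\<And>x. x \<in> k0 \<Longrightarrow> br Ups x = 0"
    and J_sq: "\<And>x. x \<in> m0 \<Longrightarrow> br Ups (br Ups x) = - x"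
    and Z: "Z \<in> m0"
  shows "((\<lambda>X. br Ups (Ad_exp br X Ups))
           has_derivative (\<lambda>W. S_op br (br Ups Z) (E_op br Z W))) (at Z within m0)"
proof -
  interpret hermsetup br k0 m0 Ups
    by unfold_locales (fact bil antisym jacobi sub_k sub_m kk km mm Ups_k Ups_central J_sq)+
  define R where "R = norm Z + 1"
  define f where "f n X = br Ups ((br X ^^ n) Ups /\<^sub>R fact n)" for n X
  define f' where "f' n X h = br Ups (D X h Ups n) /\<^sub>R fact n" for n X h
  define M where "M n = Kb^2 * norm Ups^2 * (Kb * R)^(n - 1) / fact (n - 1)" for n
  define g' where "g' X h = (\<Sum>n. f' n X h)" for X h
  define S where "S = ball Z 1"
  have R0: "0 \<le> R" unfolding R_def by simp
  have Mpos: "0 \<le> M n" for n unfolding M_def using Kb_pos R0 by simp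
  have Ms: "summable M"
  proof -
    have "summable (\<lambda>n. Kb^2 * norm Ups^2 * ((Kb * R)^n / fact n))"
      using summable_exp_generic[of "Kb * R"] by (intro summable_mult) (simp add: divide_inverse_commute)
    then have "summable (\<lambda>n. M (Suc n))" unfolding M_def by simp
    then show ?thesis using summable_Suc_iff by blast
  qed
  have blU: "bounded_linear (br Ups)" using bounded_bilinear.bounded_linear_right[OF bbil] .
  have SR: "X \<in> S \<Longrightarrow> norm X \<le> R" for X
    unfolding S_def R_def mem_ball dist_norm using norm_triangle_ineq2[of X Z] norm_minus_commute[of Z X] by linarith
  have fbound: "norm (f' n X h) \<le> M n * norm h" if X: "X \<in> S" for n X h
  proof (cases n)
    case 0 then show ?thesis using Mpos by (simp add: f'_def br_0R)
  next
    case (Suc k)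
    have "norm (br Ups (D X h Ups (Suc k))) \<le> norm Ups * norm (D X h Ups (Suc k)) * Kb" by (rule Kb_bnd)
    also have "\<dots> \<le> norm Ups * (real (Suc k) * Kb^Suc k * R^k * norm h * norm Ups) * Kb"
      using N2[OF SR[OF X], where h=h and Y=Ups and n=k] Kb_pos by (intro mult_right_mono mult_left_mono) auto
    finally have i: "norm (br Ups (D X h Ups (Suc k))) \<le> norm Ups * (real (Suc k) * Kb^Suc k * R^k * norm h * norm Ups) * Kb" .
    have "norm (br Ups (D X h Ups (Suc k))) / fact (Suc k) \<le>
        norm Ups * (real (Suc k) * Kb^Suc k * R^k * norm h * norm Ups) * Kb / fact (Suc k)"
      by (rule divide_right_mono[OF i]) simp
    also have "\<dots> = M (Suc k) * norm h"
    proof -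
      let ?C = "norm Ups * Kb^Suc k * R^k * norm h * norm Ups * Kb"
      have e1: "norm Ups * (real (Suc k) * Kb^Suc k * R^k * norm h * norm Ups) * Kb = real (Suc k) * ?C"
        by (simp only: mult_ac)
      have fs: "(fact (Suc k) :: real) = real (Suc k) * fact k" by simp
      have "norm Ups * (real (Suc k) * Kb^Suc k * R^k * norm h * norm Ups) * Kb / fact (Suc k) = ?C / fact k"
        unfolding e1 fs by (rule mult_divide_mult_cancel_left) simp
      also have "\<dots> = M (Suc k) * norm h"
        unfolding M_def by (simp add: power2_eq_square power_mult_distrib field_simps)
      finally show ?thesis .
    qed
    finally show ?thesis unfolding f'_def Suc by (simp add: divide_inverse_commute del: D.simps)
  qed
  have fsum: "summable (\<lambda>n. f' n X h)" if "X \<in> S" for X h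
    by (rule summable_comparison_test'[where N=0 and g="\<lambda>n. M n * norm h"])
      (use fbound[OF that] Ms in \<open>auto intro: summable_mult2\<close>)
  have fder: "(f n has_derivative f' n X) (at X within S)" for n X
  proof -
    have "((\<lambda>X. br Ups (inverse (fact n) *\<^sub>R (br X ^^ n) Ups)) has_derivative
        (\<lambda>h. br Ups (inverse (fact n) *\<^sub>R D X h Ups n))) (at X within S)"
      by (rule bounded_linear.has_derivative[OF blU has_derivative_scaleR_right[OF DP]])
    then show ?thesis unfolding f_def f'_def by (simp add: br_scaleR)
  qed
  have unif: "\<forall>\<^sub>F n in sequentially. \<forall>x\<in>S. \<forall>h. norm (sum (\<lambda>i. f' i x h) {..<n} - g' x h) \<le> e * norm h"
    if e: "e > 0" for e
  proof -
    obtain N where N: "\<And>n. n \<ge> N \<Longrightarrow> norm (\<Sum>i. M (i + n)) < e"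
      using suminf_exist_split[OF e Ms] by blast
    have "norm (sum (\<lambda>i. f' i x h) {..<n} - g' x h) \<le> e * norm h" if n: "n \<ge> N" and x: "x \<in> S" for n x h
    proof -
      have "sum (\<lambda>i. f' i x h) {..<n} - g' x h = - (\<Sum>i. f' (i + n) x h)"
        unfolding g'_def using suminf_minus_initial_segment[OF fsum[OF x], of n h] by simp
      then have "norm (sum (\<lambda>i. f' i x h) {..<n} - g' x h) = norm (\<Sum>i. f' (i + n) x h)" by simp
      also have "\<dots> \<le> (\<Sum>i. norm (f' (i + n) x h))"
      proof (rule summable_norm)
        show "summable (\<lambda>i. norm (f' (i + n) x h))"
          by (rule summable_comparison_test'[where N=0 and g="\<lambda>i. M (i + n) * norm h"])
            (use fbound[OF x] Ms in \<open>auto intro: summable_mult2 simp: summable_iff_shift\<close>)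
      qed
      also have "\<dots> \<le> (\<Sum>i. M (i + n) * norm h)"
      proof (rule suminf_le)
        show "summable (\<lambda>i. norm (f' (i + n) x h))"
          by (rule summable_comparison_test'[where N=0 and g="\<lambda>i. M (i + n) * norm h"])
            (use fbound[OF x] Ms in \<open>auto intro: summable_mult2 simp: summable_iff_shift\<close>)
        show "summable (\<lambda>i. M (i + n) * norm h)"
          using Ms by (auto intro: summable_mult2 simp: summable_iff_shift)
      qed (use fbound[OF x] in auto)
      also have "\<dots> = (\<Sum>i. M (i + n)) * norm h"
        using Ms by (intro suminf_mult2[symmetric]) (simp add: summable_iff_shift)
      also have "\<dots> \<le> e * norm h"
      proof (rule mult_right_mono)
        have "0 \<le> (\<Sum>i. M (i + n))" using Mpos Ms by (intro suminf_nonneg) (auto simp: summable_iff_shift)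
        then show "(\<Sum>i. M (i + n)) \<le> e" using N[OF n] by simp
      qed simp
      finally show ?thesis .
    qed
    then show ?thesis unfolding eventually_sequentially by blast
  qed
  have ZS: "Z \<in> S" unfolding S_def by simp
  have fZs: "(\<lambda>n. f n Z) sums (\<Sum>n. f n Z)"
    unfolding f_def using bounded_linear.summable[OF blU Ad_summable] by (simp add: summable_sums)
  obtain g where g: "\<And>x. x \<in> S \<Longrightarrow> (\<lambda>n. f n x) sums (g x) \<and> (g has_derivative g' x) (at x within S)"
  proof -
    have cS: "convex S" unfolding S_def by simp
    show ?thesis using has_derivative_series[OF cS fder unif ZS fZs] that by blast
  qed
  have FG: "br Ups (Ad_exp br X Ups) = g X" if "X \<in> S" for X
  proof -
    have "br Ups (Ad_exp br X Ups) = (\<Sum>n. f n X)"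
      unfolding Ad_exp_def f_def using bounded_linear.suminf[OF blU Ad_summable] .
    also have "\<dots> = g X" using g[OF that] sums_unique by metis
    finally show ?thesis .
  qed
  have "(g has_derivative g' Z) (at Z)"
  proof -
    have oS: "open S" unfolding S_def by simp
    show ?thesis using g[OF ZS] at_within_open[OF ZS oS] by simp
  qed
  then have d1: "((\<lambda>X. br Ups (Ad_exp br X Ups)) has_derivative g' Z) (at Z)"
    by (rule has_derivative_transform_within_open[where s=S]) (use FG ZS in \<open>auto simp: S_def\<close>)
  then have d2: "((\<lambda>X. br Ups (Ad_exp br X Ups)) has_derivative g' Z) (at Z within m0)"
    by (rule has_derivative_at_withinI)
  show ?thesis
  proof (rule hd_transform_sub[OF d2])
    have linE: "linear (\<lambda>W. E_op br Z W)"
      unfolding E_op_def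
      by (rule linear_suminf[where L="\<lambda>n x. (br Z ^^ (2*n)) x /\<^sub>R fact (2*n+1)"])
        (rule lin_pow_scale, rule pow_even_summable)
    have sum0: "summable (\<lambda>n. (br (br Ups Z) ^^ (2*n)) x /\<^sub>R fact (2*n))" for x
      using pow_even_summable[where Y="br Ups Z" and x=x and k=0] by simp
    have linS: "linear (\<lambda>V. S_op br (br Ups Z) V)"
      unfolding S_op_def
      by (rule linear_suminf[where L="\<lambda>n x. (br (br Ups Z) ^^ (2*n)) x /\<^sub>R fact (2*n)"])
        (rule lin_pow_scale, rule sum0)
    show "bounded_linear (\<lambda>W. S_op br (br Ups Z) (E_op br Z W))"
      unfolding linear_conv_bounded_linear[symmetric] using linear_compose[OF linE linS] by (simp add: o_def)
    have key: "g' Z W = S_op br (br Ups Z) (E_op br Z W)" if W: "W \<in> m0" for W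
    proof -
      define T' where "T' a x = (br (br Ups Z) ^^ (2*a)) x /\<^sub>R fact (2*a)" for a x
      define v where "v b = (br Z ^^ (2*b)) W /\<^sub>R fact (2*b+1)" for b
      define t where "t a = (Kb * norm (br Ups Z))^(2*a) / fact (2*a)" for a
      have C: "(\<lambda>m. \<Sum>a\<le>m. T' a (v (m-a))) sums (\<Sum>a. T' a (\<Sum>b. v b))"
      proof (rule cauchy_lin)
        show "bounded_linear (T' i)" for i
          unfolding T'_def using lin_pow_scale linear_conv_bounded_linear by blast
        show "norm (T' i x) \<le> t i * norm x" for i x
        proof -
          have "norm ((br (br Ups Z) ^^ (2*i)) x) / fact (2*i) \<le> (Kb * norm (br Ups Z))^(2*i) * norm x / fact (2*i)"
            using N1[where X="br Ups Z" and n="2*i" and Y=x] by (rule divide_right_mono) simp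
          then show ?thesis unfolding T'_def t_def by (simp add: divide_inverse_commute)
        qed
        show "0 \<le> t i" for i unfolding t_def using Kb_pos by simp
        show "summable t" unfolding t_def
          using summable_even_fact[of "Kb * norm (br Ups Z)" 0] Kb_pos by simp
        show "summable (\<lambda>j. norm (v j))" unfolding v_def by (rule pow_even_norm_summable)
      qed
      have eq: "(\<Sum>a\<le>m. T' a (v (m-a))) = f' (2*m+1) Z W" for m
        unfolding f'_def deg_odd[OF Z W] T'_def v_def
        by (intro sum.cong refl) (simp add: pow_scale)
      have C2': "(\<lambda>m. f' (2*m+1) Z W) sums S_op br (br Ups Z) (E_op br Z W)"
      proof -
        have "(\<lambda>m. f' (2*m+1) Z W) sums (\<Sum>a. T' a (\<Sum>b. v b))" using C unfolding eq .
        moreover have "(\<Sum>a. T' a (\<Sum>b. v b)) = S_op br (br Ups Z) (E_op br Z W)"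
          unfolding S_op_def E_op_def T'_def v_def ..
        ultimately show ?thesis by simp
      qed
      have sm: "strict_mono (\<lambda>m::nat. 2*m+1)" by (rule strict_monoI) simp
      have z: "f' n Z W = 0" if "n \<notin> range (\<lambda>m::nat. 2*m+1)" for n
      proof -
        have "even n"
        proof (rule ccontr)
          assume "odd n"
          then have "n = 2*(n div 2)+1" by simp
          then show False using that by blast
        qed
        then have "n = 2*(n div 2)" by simp
        then have "D Z W Ups n = D Z W Ups (2*(n div 2))" by (rule arg_cong)
        then have "br Ups (D Z W Ups n) = 0" using deg_even[OF Z W, of "n div 2"] by (simp only:)
        then show ?thesis unfolding f'_def by simp
      qed
      have "(\<lambda>n. f' n Z W) sums S_op br (br Ups Z) (E_op br Z W)"
        using sums_mono_reindex[of "\<lambda>m::nat. 2*m+1" "\<lambda>n. f' n Z W", OF sm z] C2' by simp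
      then show ?thesis unfolding g'_def by (rule sums_unique[symmetric])
    qed
    show "g' Z (y - Z) = S_op br (br Ups Z) (E_op br Z (y - Z))" if "y \<in> m0" for y
      using key[of "y - Z"] that Z sub_m by (simp add: subspace_diff)
  qed
qed

end
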